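(* Let $n\ge 6$ be even, let $j\in\{1,2,3,4\}$, and let $t\in D$ lie in the $j$-th segment of level $n$, i.e. $M_{n-1}+(j-1)2^{n-3}<t\le M_{n-1}+j\,2^{n-3}$. Then $4t-1$, $4t+1$, $4t+3$ all belong to $D$ and all lie in the $j$-th segment of level $n+2$, i.e. in the interval $\big(M_{n+1}+(j-1)2^{n-1},\ M_{n+1}+j\,2^{n-1}\big]$.
   Context: Let $D$ (OEIS A036991) be the set of nonnegative integers $m$ such that, reading the binary expansion of $m$ from the least significant bit to the most significant bit, at every point the number of 1's read so far is at least the number of 0's read so far. Let $M_n=2^n-1$. For even $n\ge 6$ the interval $(M_{n-1},M_n]$ (the $n$-level, of length $2^{n-1}$) is divided into four equal segments $(M_{n-1}+(j-1)2^{n-3},\,M_{n-1}+j\,2^{n-3}]$, $j=1,2,3,4$. *)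

theory Defs
  imports Main
begin

fun bin_digits :: "nat \<Rightarrow> nat list" where
  "bin_digits m = (if m = 0 then [] else m mod 2 # bin_digits (m div 2))"

text \<open>The set D (OEIS A036991): reading the binary expansion from the least significant
bit, every prefix contains at least as many 1's as 0's.\<close>
definition D :: "nat set" where
  "D = {m. \<forall>k \<le> length (bin_digits m).
            length (filter (\<lambda>b. b = 0) (take k (bin_digits m)))
              \<le> length (filter (\<lambda>b. b = 1) (take k (bin_digits m)))}"

definition M :: "nat \<Rightarrow> nat" where
  "M n = 2 ^ n - 1"

end

theory Submission
  imports Defs
begin

declare bin_digits.simps[simp del]

lemma bd_step: "m > 0 \<Longrightarrow> bin_digits m = m mod 2 # bin_digits (m div 2)"
  by (subst bin_digits.simps) simp

definition g :: "nat list \<Rightarrow> int" where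
  "g xs = int (length (filter (\<lambda>b. b = 1) xs)) - int (length (filter (\<lambda>b. b = 0) xs))"

definition Q :: "int \<Rightarrow> nat list \<Rightarrow> bool" where
  "Q c xs = (\<forall>k\<le>length xs. 0 \<le> c + g (take k xs))"

lemma g_cons: "g (a # xs) = g [a] + g xs"
  by (simp add: g_def)

lemma D_Q: "m \<in> D \<longleftrightarrow> Q 0 (bin_digits m)"
  by (simp add: D_def Q_def g_def)

lemma Q_cons: "Q c (a # xs) \<longleftrightarrow> (0 \<le> c \<and> Q (c + g [a]) xs)"
proof
  assume h: "Q c (a # xs)"
  have 1: "0 \<le> c" using h unfolding Q_def by (auto simp: g_def)
  have "Q (c + g [a]) xs" unfolding Q_def
  proof (intro allI impI)
    fix k assume "k \<le> length xs"
    then have "Suc k \<le> length (a # xs)" by simp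
    then have "0 \<le> c + g (take (Suc k) (a # xs))" using h unfolding Q_def by blast
    then show "0 \<le> c + g [a] + g (take k xs)" by (simp add: g_def algebra_simps split: if_splits)
  qed
  with 1 show "0 \<le> c \<and> Q (c + g [a]) xs" by simp
next
  assume h: "0 \<le> c \<and> Q (c + g [a]) xs"
  show "Q c (a # xs)" unfolding Q_def
  proof (intro allI impI)
    fix k assume k: "k \<le> length (a # xs)"
    show "0 \<le> c + g (take k (a # xs))"
    proof (cases k)
      case 0 then show ?thesis using h by (simp add: g_def)
    next
      case (Suc k')
      then have "k' \<le> length xs" using k by simp
      then have "0 \<le> c + g [a] + g (take k' xs)" using h unfolding Q_def by simp
      then show ?thesis using Suc by (simp add: g_def algebra_simps split: if_splits)
    qed
  qed
qed

lemma Q_mono: "Q c xs \<Longrightarrow> c \<le> d \<Longrightarrow> Q d xs"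
  unfolding Q_def by force

lemma Q_nonneg: "Q c xs \<Longrightarrow> 0 \<le> c"
  unfolding Q_def by (drule spec[of _ 0]) (simp add: g_def)

lemma g0: "g [0] = -1" and g1: "g [1] = 1" "g [Suc 0] = 1" by (simp_all add: g_def)

theorem proposition12:
  fixes n j t :: nat
  assumes "even n" and "n \<ge> 6"
    and "j \<in> {1, 2, 3, 4}"
    and "t \<in> D"
    and "M (n - 1) + (j - 1) * 2 ^ (n - 3) < t" and "t \<le> M (n - 1) + j * 2 ^ (n - 3)"
  shows "\<forall>s \<in> {4 * t - 1, 4 * t + 1, 4 * t + 3}.
           s \<in> D \<and> M (n + 1) + (j - 1) * 2 ^ (n - 1) < s \<and> s \<le> M (n + 1) + j * 2 ^ (n - 1)"
proof -
  have tpos: "t > 0" using assms(5) by simp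
  have todd: "odd t"
  proof
    assume "even t"
    then have "bin_digits t = 0 # bin_digits (t div 2)" using bd_step[OF tpos] by simp
    then have "Q (-1) (bin_digits (t div 2))" using assms(4) by (simp add: D_Q Q_cons g0)
    then show False using Q_nonneg by force
  qed
  have bt: "bin_digits t = 1 # bin_digits (t div 2)" using bd_step[OF tpos] todd by (simp add: odd_iff_mod_2_eq_one)
  have Q1: "Q 1 (bin_digits (t div 2))" using assms(4) bt by (simp add: D_Q Q_cons g1)
  have e3: "bin_digits (4*t+3) = 1 # 1 # bin_digits t"
  proof -
    have a: "(4*t+3) mod 2 = 1" "(4*t+3) div 2 = 2*t+1" "(2*t+1) mod 2 = 1" "(2*t+1) div 2 = t" by presburger+
    show ?thesis using bd_step[of "4*t+3"] bd_step[of "2*t+1"] unfolding a by simp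
  qed
  have e1: "bin_digits (4*t+1) = 1 # 0 # bin_digits t"
  proof -
    have a: "(4*t+1) mod 2 = 1" "(4*t+1) div 2 = 2*t" "(2*t) mod 2 = 0" "(2*t) div 2 = t" by presburger+
    show ?thesis using bd_step[of "4*t+1"] bd_step[of "2*t"] tpos unfolding a by simp
  qed
  obtain u where u: "t = 2*u+1" using todd oddE by blast
  have e0: "bin_digits (4*t-1) = 1 # 1 # 0 # bin_digits (t div 2)"
  proof -
    have a: "4*t-1 = 8*u+3" "(8*u+3) mod 2 = 1" "(8*u+3) div 2 = 4*u+1" "(4*u+1) mod 2 = 1"
      "(4*u+1) div 2 = 2*u" "(2*u) mod 2 = 0" "(2*u) div 2 = u" "t div 2 = u" using u by presburger+
    have "(1::nat) < 2 ^ (n - 1)" using assms(2) by (intro one_less_power) auto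
    then have "M (n - 1) > 0" by (simp add: M_def)
    then have "u > 0" using assms(5) u by simp
    then have "bin_digits (2*u) = 0 # bin_digits u" using bd_step[of "2*u"] unfolding a by simp
    then show ?thesis using bd_step[of "8*u+3"] bd_step[of "4*u+1"] unfolding a by simp
  qed
  have D3: "4*t+3 \<in> D" unfolding D_Q e3 bt using Q_mono[OF Q1] by (simp add: Q_cons g1)
  have D1: "4*t+1 \<in> D" unfolding D_Q e1 bt using Q_mono[OF Q1] by (simp add: Q_cons g1 g0)
  have D0: "4*t-1 \<in> D" unfolding D_Q e0 using Q_mono[OF Q1] by (simp add: Q_cons g1 g0)
  obtain m where m: "n = m + 6" using assms(2) by (metis add.commute le_Suc_ex)
  have p1: "(2::nat) ^ (n - 1) = 32 * 2^m" and p3: "(2::nat) ^ (n - 3) = 8 * 2^m"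
    and p5: "(2::nat)^(n+1) = 128 * 2^m"
    by (simp_all add: m power_add)
  have Mn1: "M (n - 1) = 32 * 2^m - 1" and Mn3: "M (n+1) = 128 * 2^m - 1"
    using p1 p5 by (simp_all add: M_def)
  have neq: "t \<noteq> 32 * 2^m + (j - 1) * (8 * 2^m)"
  proof
    assume "t = 32 * 2^m + (j - 1) * (8 * 2^m)"
    then have "even t" by simp
    with todd show False by simp
  qed
  have pos: "(2::nat)^m > 0" by simp
  define P where "P = (2::nat)^m"
  define A where "A = (j - 1) * (8 * P)"
  define B where "B = j * (8 * P)"
  have A4: "(j - 1) * (32 * P) = 4 * A" unfolding A_def by simp
  have B4: "j * (32 * P) = 4 * B" unfolding B_def by simp
  have Pp: "P > 0" using pos P_def by simp
  have lo: "32 * P + A < t" using assms(5) neq Pp unfolding Mn1 p3 P_def[symmetric] A_def by linarith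
  have hi: "t + 1 \<le> 32 * P + B" using assms(6) Pp unfolding Mn1 p3 P_def[symmetric] B_def by linarith
  have lo4: "128 * P - 1 + 4 * A < 4 * t - 1" using lo Pp by linarith
  have hi4: "4 * t + 3 \<le> 128 * P - 1 + 4 * B" using hi Pp by linarith
  have q1: "M (n + 1) + (j - 1) * 2 ^ (n - 1) = 128 * P - 1 + 4 * A"
    unfolding Mn3 p1 P_def[symmetric] A4 ..
  have q2: "M (n + 1) + j * 2 ^ (n - 1) = 128 * P - 1 + 4 * B"
    unfolding Mn3 p1 P_def[symmetric] B4 ..
  have x: "4 * t - 1 \<le> 128 * P - 1 + 4 * B" "4 * t + 1 \<le> 128 * P - 1 + 4 * B"
    "128 * P - 1 + 4 * A < 4 * t + 1" "128 * P - 1 + 4 * A < 4 * t + 3" using lo4 hi4 by linarith+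
  show ?thesis unfolding q1 q2
  proof (intro ballI)
    fix s assume "s \<in> {4 * t - 1, 4 * t + 1, 4 * t + 3}"
    then consider "s = 4 * t - 1" | "s = 4 * t + 1" | "s = 4 * t + 3" by blast
    then show "s \<in> D \<and> 128 * P - 1 + 4 * A < s \<and> s \<le> 128 * P - 1 + 4 * B"
    proof cases
      case 1 then show ?thesis using D0 lo4 x(1) by blast
    next
      case 2 then show ?thesis using D1 x(2) x(3) by blast
    next
      case 3 then show ?thesis using D3 hi4 x(4) by blast
    qed
  qed
qed

end
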